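(* The reduction relation $\to_{\tt j}$ on $\lambda j$-terms is confluent and terminating. Consequently every term $t$ has a unique ${\tt j}$-normal form ${\tt j}(t)$, and: ${\tt j}(x)=x$, ${\tt j}(\lambda x.u)=\lambda x.{\tt j}(u)$, ${\tt j}(u\,v)={\tt j}(u)\,{\tt j}(v)$, and ${\tt j}(u[x/v])={\tt j}(u)\{x/{\tt j}(v)\}$.
   Context: $\lambda j$-terms are generated by $t,u::= x\mid \lambda x.t\mid t\,u\mid t[x/u]$ ($x$ ranging over variables); $\lambda x.t$ and $t[x/u]$ bind $x$ in $t$ (not in $u$), and terms are considered modulo $\alpha$-conversion. $\mathrm{fv}(t)$ is the set of free variables, $t\{x/u\}$ is capture-avoiding meta-level substitution, and $|t|_x$ is the number of free occurrences of $x$ in $t$. If $|t|_x=n\ge2$, $t_{[y]_x}$ denotes any term obtained from $t$ by replacing $k$ of the free occurrences of $x$ by a fresh variable $y$, for some $1\le k\le n-1$. The relation $\to_{\tt j}$ is the closure under all contexts of the rules: $({\tt w})$ $t[x/u]\to t$ if $|t|_x=0$; $({\tt d})$ $t[x/u]\to t\{x/u\}$ if $|t|_x=1$; $({\tt c})$ $t[x/u]\to t_{[y]_x}[x/u][y/u]$ if $|t|_x\ge2$, $y$ fresh. *)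

theory Defs
  imports Main
begin

text \<open>lambda-j terms in de Bruijn notation (terms modulo alpha-conversion).
  Var i is a variable, Lam t binds index 0 in t, App t u is application and
  ESub t u is the explicit substitution t[x/u], which binds index 0 (= x) in t
  but not in u.\<close>

datatype trm = Var nat | Lam trm | App trm trm | ESub trm trm

fun lift :: "trm \<Rightarrow> nat \<Rightarrow> trm" where
  "lift (Var i) k = (if i < k then Var i else Var (Suc i))"
| "lift (Lam t) k = Lam (lift t (Suc k))"
| "lift (App t u) k = App (lift t k) (lift u k)"
| "lift (ESub t u) k = ESub (lift t (Suc k)) (lift u k)"

text \<open>Capture-avoiding meta-level substitution: subst t k s replaces index k
  in t by s and decrements the indices above k.  t{x/u} for the binder of x
  is subst t 0 u.\<close>
fun subst :: "trm \<Rightarrow> nat \<Rightarrow> trm \<Rightarrow> trm" where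
  "subst (Var i) k s = (if i < k then Var i else if i = k then s else Var (i - 1))"
| "subst (Lam t) k s = Lam (subst t (Suc k) (lift s 0))"
| "subst (App t u) k s = App (subst t k s) (subst u k s)"
| "subst (ESub t u) k s = ESub (subst t (Suc k) (lift s 0)) (subst u k s)"

fun occ :: "trm \<Rightarrow> nat \<Rightarrow> nat" where
  "occ (Var i) k = (if i = k then 1 else 0)"
| "occ (Lam t) k = occ t (Suc k)"
| "occ (App t u) k = occ t k + occ u k"
| "occ (ESub t u) k = occ t (Suc k) + occ u k"

text \<open>split k t t': t' is obtained from t by inserting a fresh binder for y
  just outside the binder of x (index k), and renaming some (possibly none or all)
  free occurrences of x (index k) into y (index k+1); other free indices
  above k are shifted by one.\<close>
inductive split :: "nat \<Rightarrow> trm \<Rightarrow> trm \<Rightarrow> bool" where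
  split_lt: "i < k \<Longrightarrow> split k (Var i) (Var i)"
| split_gt: "i > k \<Longrightarrow> split k (Var i) (Var (Suc i))"
| split_keep: "split k (Var k) (Var k)"
| split_ren: "split k (Var k) (Var (Suc k))"
| split_lam: "split (Suc k) t t' \<Longrightarrow> split k (Lam t) (Lam t')"
| split_app: "split k t t' \<Longrightarrow> split k u u' \<Longrightarrow> split k (App t u) (App t' u')"
| split_esub: "split (Suc k) t t' \<Longrightarrow> split k u u' \<Longrightarrow> split k (ESub t u) (ESub t' u')"

text \<open>In rule c, t' = t_[y]_x with x = index 0, y = index 1, and the requirement that
  both x and y still occur means 1 <= k <= n-1 occurrences are renamed.
  The result t_[y]_x[x/u][y/u] has u lifted in the inner substitution because
  it lies under the binder of y (y fresh, so y is not free in u).\<close>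
inductive jstep :: "trm \<Rightarrow> trm \<Rightarrow> bool" where
  j_w: "occ t 0 = 0 \<Longrightarrow> jstep (ESub t u) (subst t 0 u)"
| j_d: "occ t 0 = 1 \<Longrightarrow> jstep (ESub t u) (subst t 0 u)"
| j_c: "occ t 0 \<ge> 2 \<Longrightarrow> split 0 t t' \<Longrightarrow> occ t' 0 \<ge> 1 \<Longrightarrow> occ t' 1 \<ge> 1 \<Longrightarrow>
        jstep (ESub t u) (ESub (ESub t' (lift u 0)) u)"
| j_lam: "jstep t t' \<Longrightarrow> jstep (Lam t) (Lam t')"
| j_appl: "jstep t t' \<Longrightarrow> jstep (App t u) (App t' u)"
| j_appr: "jstep u u' \<Longrightarrow> jstep (App t u) (App t u')"
| j_esubl: "jstep t t' \<Longrightarrow> jstep (ESub t u) (ESub t' u)"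
| j_esubr: "jstep u u' \<Longrightarrow> jstep (ESub t u) (ESub t u')"

definition confluent :: "('a \<Rightarrow> 'a \<Rightarrow> bool) \<Rightarrow> bool" where
  "confluent R \<longleftrightarrow> (\<forall>a b c. R\<^sup>*\<^sup>* a b \<and> R\<^sup>*\<^sup>* a c \<longrightarrow> (\<exists>d. R\<^sup>*\<^sup>* b d \<and> R\<^sup>*\<^sup>* c d))"

definition terminating :: "('a \<Rightarrow> 'a \<Rightarrow> bool) \<Rightarrow> bool" where
  "terminating R \<longleftrightarrow> wfP (\<lambda>b a. R a b)"

definition j_normal :: "trm \<Rightarrow> bool" where
  "j_normal t \<longleftrightarrow> (\<nexists>t'. jstep t t')"

definition jnf :: "trm \<Rightarrow> trm" where
  "jnf t = (THE s. jstep\<^sup>*\<^sup>* t s \<and> j_normal s)"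

end

theory Submission
  imports Defs
begin

declare if_not_P [simp] not_less_eq [simp]

lemma lift_lift:
    "i < k + 1 \<Longrightarrow> lift (lift t i) (Suc k) = lift (lift t k) i"
  by (induct t arbitrary: i k) auto

lemma lift_subst [simp]:
    "j < i + 1 \<Longrightarrow> lift (subst t j s) i = subst (lift t (i + 1)) j (lift s i)"
  by (induct t arbitrary: i j s)
    (simp_all add: diff_Suc lift_lift split: nat.split)

lemma lift_subst_lt:
    "i < j + 1 \<Longrightarrow> lift (subst t j s) i = subst (lift t i) (j + 1) (lift s i)"
  by (induct t arbitrary: i j s) (simp_all add: lift_lift)

lemma subst_lift [simp]:
    "subst (lift t k) k s = t"
  by (induct t arbitrary: k s) simp_all

lemma subst_subst:
    "i < j + 1 \<Longrightarrow> subst (subst t (Suc j) (lift v i)) i (subst u j v) = subst (subst t i u) j v"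
  by (induct t arbitrary: i j u v)
    (simp_all add: diff_Suc lift_lift [symmetric] lift_subst_lt
      split: nat.split)


fun F :: "trm \<Rightarrow> trm" where
  "F (Var i) = Var i"
| "F (Lam t) = Lam (F t)"
| "F (App t u) = App (F t) (F u)"
| "F (ESub t u) = subst (F t) 0 (F u)"

lemma F_lift: "F (lift t k) = lift (F t) k"
  by (induct t arbitrary: k) auto

lemma F_subst: "F (subst t k s) = subst (F t) k (F s)"
proof (induct t arbitrary: k s)
  case (ESub t u)
  then show ?case by (simp add: F_lift subst_subst[of 0 k, symmetric])
qed (auto simp: F_lift)

lemma split_lift: "split k u u' \<Longrightarrow> j \<le> k \<Longrightarrow> split (Suc k) (lift u j) (lift u' j)"
proof (induct arbitrary: j rule: split.induct)
qed (auto intro: split.intros)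

lemma split_subst: "split k' t t' \<Longrightarrow> k' = Suc k \<Longrightarrow> split k u u' \<Longrightarrow> j \<le> k \<Longrightarrow>
   split k (subst t j u) (subst t' j u')"
proof (induct arbitrary: k u u' j rule: split.induct)
  case (split_lt i k')
  then show ?case by (auto intro: split.intros)
next
  case (split_gt i k')
  then have "split k (Var (i - 1)) (Var (Suc (i - 1)))" by (intro split.intros) auto
  then show ?case using split_gt by auto
next
  case (split_keep k')
  then show ?case by (auto intro: split.intros)
next
  case (split_ren k')
  then show ?case by (auto intro: split.intros)
next
  case (split_lam k' t t')
  have "split (Suc k) (subst t (Suc j) (lift u 0)) (subst t' (Suc j) (lift u' 0))"
    using split_lam by (intro split_lam(2)) (auto intro!: split_lift)
  then show ?case using split_lam by (auto intro!: split.intros)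
next
  case (split_app k' t t' u u')
  then show ?case by (auto intro!: split.intros)
next
  case (split_esub k' t t' v v')
  have "split (Suc k) (subst t (Suc j) (lift u 0)) (subst t' (Suc j) (lift u' 0))"
    using split_esub by (intro split_esub(2)) (auto intro!: split_lift)
  then show ?case using split_esub by (auto intro!: split.intros)
qed

lemma split_F: "split k t t' \<Longrightarrow> split k (F t) (F t')"
  by (induct rule: split.induct) (auto intro: split.intros split_subst)

lemma lift_lift0: "lift (lift v k) 0 = lift (lift v 0) (Suc k)"
  by (simp add: lift_lift)

lemma split_subst_subst: "split k s s' \<Longrightarrow> subst (subst s' k (lift v k)) k v = subst s k v"
proof (induct arbitrary: v rule: split.induct)
  case (split_lam k t t')
  then show ?case by (simp add: lift_lift0)
next
  case (split_esub k t t' u u')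
  then show ?case by (simp add: lift_lift0)
qed auto

inductive_cases split_VarE: "split k (Var i) t'"

lemma jstep_F: "jstep t t' \<Longrightarrow> F t' = F t"
proof (induct rule: jstep.induct)
  case (j_c t t' u)
  then show ?case using split_subst_subst[OF split_F[OF j_c(2)], of "F u"]
    by (simp add: F_lift)
qed (auto simp: F_subst)

lemma rtc_F: "jstep\<^sup>*\<^sup>* t t' \<Longrightarrow> F t' = F t"
  by (induct rule: rtranclp_induct) (auto dest: jstep_F)


lemma occ_lift: "occ (lift s k) j = (if j < k then occ s j else if j = k then 0 else occ s (j - 1))"
  by (induct s arbitrary: k j) (auto split: nat.split)

lemma occ_subst: "occ (subst t k s) j = (if j < k then occ t j else occ t (Suc j)) + occ t k * occ s j"
  by (induct t arbitrary: k j s) (auto simp: occ_lift algebra_simps split: nat.split)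

lemma split_keep_all: "split k s (lift s (Suc k))"
proof (induct s arbitrary: k)
  case (Var x)
  show ?case
  proof (cases "x < k")
    case True then show ?thesis by (auto intro: split.intros)
  next
    case False
    then have "x = k \<or> x > k" by auto
    then show ?thesis by (auto intro: split.intros)
  qed
qed (auto intro: split.intros)

lemma split_one: "occ s k \<ge> 1 \<Longrightarrow> \<exists>s'. split k s s' \<and> occ s' k = occ s k - 1 \<and> occ s' (Suc k) = 1"
proof (induct s arbitrary: k)
  case (Var i)
  then show ?case by (auto intro!: exI[of _ "Var (Suc k)"] split.intros split: if_splits)
next
  case (Lam t)
  then obtain t' where "split (Suc k) t t'" "occ t' (Suc k) = occ t (Suc k) - 1" "occ t' (Suc (Suc k)) = 1"
    by auto
  then show ?case by (auto intro!: exI[of _ "Lam t'"] split.intros)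
next
  case (App t u)
  show ?case
  proof (cases "occ t k \<ge> 1")
    case True
    with App obtain t' where "split k t t'" "occ t' k = occ t k - 1" "occ t' (Suc k) = 1" by auto
    then show ?thesis using True
      by (auto intro!: exI[of _ "App t' (lift u (Suc k))"] split.intros split_keep_all simp: occ_lift)
  next
    case False
    have "occ u k \<ge> 1" using App.prems False by simp
    then obtain u' where "split k u u'" "occ u' k = occ u k - 1" "occ u' (Suc k) = 1" using App(2) by blast
    then show ?thesis using False App.prems
      by (auto intro!: exI[of _ "App (lift t (Suc k)) u'"] split.intros split_keep_all simp: occ_lift)
  qed
next
  case (ESub t u)
  show ?case
  proof (cases "occ t (Suc k) \<ge> 1")
    case True
    with ESub obtain t' where "split (Suc k) t t'" "occ t' (Suc k) = occ t (Suc k) - 1" "occ t' (Suc (Suc k)) = 1" by auto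
    then show ?thesis using True
      by (auto intro!: exI[of _ "ESub t' (lift u (Suc k))"] split.intros split_keep_all simp: occ_lift)
  next
    case False
    have "occ u k \<ge> 1" using ESub.prems False by simp
    then obtain u' where "split k u u'" "occ u' k = occ u k - 1" "occ u' (Suc k) = 1" using ESub(2) by blast
    then show ?thesis using False ESub.prems
      by (auto intro!: exI[of _ "ESub (lift t (Suc (Suc k))) u'"] split.intros split_keep_all simp: occ_lift)
  qed
qed

lemma rtc_Lam: "jstep\<^sup>*\<^sup>* s s' \<Longrightarrow> jstep\<^sup>*\<^sup>* (Lam s) (Lam s')"
  by (induct rule: rtranclp_induct) (auto intro: rtranclp.rtrancl_into_rtrancl jstep.intros)
lemma rtc_AppL: "jstep\<^sup>*\<^sup>* s s' \<Longrightarrow> jstep\<^sup>*\<^sup>* (App s t) (App s' t)"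
  by (induct rule: rtranclp_induct) (auto intro: rtranclp.rtrancl_into_rtrancl jstep.intros)
lemma rtc_AppR: "jstep\<^sup>*\<^sup>* s s' \<Longrightarrow> jstep\<^sup>*\<^sup>* (App t s) (App t s')"
  by (induct rule: rtranclp_induct) (auto intro: rtranclp.rtrancl_into_rtrancl jstep.intros)
lemma rtc_ESubL: "jstep\<^sup>*\<^sup>* s s' \<Longrightarrow> jstep\<^sup>*\<^sup>* (ESub s t) (ESub s' t)"
  by (induct rule: rtranclp_induct) (auto intro: rtranclp.rtrancl_into_rtrancl jstep.intros)
lemma rtc_ESubR: "jstep\<^sup>*\<^sup>* s s' \<Longrightarrow> jstep\<^sup>*\<^sup>* (ESub t s) (ESub t s')"
  by (induct rule: rtranclp_induct) (auto intro: rtranclp.rtrancl_into_rtrancl jstep.intros)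

lemma ESub_red: "occ s 0 = n \<Longrightarrow> jstep\<^sup>*\<^sup>* (ESub s v) (subst s 0 v)"
proof (induct n arbitrary: s v rule: less_induct)
  case (less n)
  show ?case
  proof (cases "n \<ge> 2")
    case False
    then have "occ s 0 = 0 \<or> occ s 0 = 1" using less by auto
    then have "jstep (ESub s v) (subst s 0 v)" using j_w j_d by blast
    then show ?thesis by auto
  next
    case True
    then obtain s' where s': "split 0 s s'" "occ s' 0 = n - 1" "occ s' 1 = 1"
      using split_one[of s 0] less(2) by auto
    have 1: "jstep (ESub s v) (ESub (ESub s' (lift v 0)) v)"
      using True s' less(2) by (intro j_c) auto
    have 2: "jstep\<^sup>*\<^sup>* (ESub s' (lift v 0)) (subst s' 0 (lift v 0))"
      using less(1)[of "n - 1"] s' True by auto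
    have 3: "jstep\<^sup>*\<^sup>* (ESub (subst s' 0 (lift v 0)) v) (subst (subst s' 0 (lift v 0)) 0 v)"
      using less(1)[of 1] s' True by (auto simp: occ_subst occ_lift)
    have "jstep\<^sup>*\<^sup>* (ESub s v) (subst (subst s' 0 (lift v 0)) 0 v)"
      using 1 rtc_ESubL[OF 2, of v] 3 by (meson converse_rtranclp_into_rtranclp rtranclp_trans)
    then show ?thesis using split_subst_subst[OF s'(1)] by simp
  qed
qed

lemma red_F: "jstep\<^sup>*\<^sup>* t (F t)"
proof (induct t)
  case (Lam t) then show ?case by (auto intro: rtc_Lam)
next
  case (App t u) then show ?case by (auto intro: rtc_AppL rtc_AppR rtranclp_trans)
next
  case (ESub t u)
  have "jstep\<^sup>*\<^sup>* (ESub t u) (ESub (F t) u)" by (rule rtc_ESubL[OF ESub(1)])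
  also have "jstep\<^sup>*\<^sup>* (ESub (F t) u) (ESub (F t) (F u))" by (rule rtc_ESubR[OF ESub(2)])
  also have "jstep\<^sup>*\<^sup>* (ESub (F t) (F u)) (subst (F t) 0 (F u))" by (rule ESub_red) simp
  finally show ?case by simp
qed auto

fun nosub :: "trm \<Rightarrow> bool" where
  "nosub (Var i) = True"
| "nosub (Lam t) = nosub t"
| "nosub (App t u) = (nosub t \<and> nosub u)"
| "nosub (ESub t u) = False"

lemma nosub_lift: "nosub t \<Longrightarrow> nosub (lift t k)"
  by (induct t arbitrary: k) auto

lemma nosub_subst: "nosub t \<Longrightarrow> nosub s \<Longrightarrow> nosub (subst t k s)"
  by (induct t arbitrary: k s) (auto simp: nosub_lift)

lemma nosub_F: "nosub (F t)"
  by (induct t) (auto simp: nosub_subst)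

lemma nosub_normal: "jstep t t' \<Longrightarrow> \<not> nosub t"
  by (induct rule: jstep.induct) auto

lemma normal_F: "j_normal (F t)"
  unfolding j_normal_def using nosub_F nosub_normal by blast

lemma normal_eq: "jstep\<^sup>*\<^sup>* t s \<Longrightarrow> j_normal s \<Longrightarrow> s = F t"
proof -
  assume a: "jstep\<^sup>*\<^sup>* t s" "j_normal s"
  have "jstep\<^sup>*\<^sup>* s (F s)" by (rule red_F)
  then have "F s = s" using a(2) unfolding j_normal_def
    by (cases rule: converse_rtranclpE) auto
  then show ?thesis using rtc_F[OF a(1)] by simp
qed

lemma jnf_F: "jnf t = F t"
  unfolding jnf_def
  by (rule the_equality) (auto simp: red_F normal_F normal_eq)


fun m :: "trm \<Rightarrow> nat \<Rightarrow> nat" where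
  "m (Var i) k = (if i = k then 1 else 0)"
| "m (Lam t) k = m t (Suc k)"
| "m (App t u) k = m t k + m u k"
| "m (ESub t u) k = m t (Suc k) + max 1 (m t 0) * m u k"

fun W :: "trm \<Rightarrow> (nat \<Rightarrow> nat) \<Rightarrow> nat" where
  "W (Var i) \<rho> = \<rho> i"
| "W (Lam t) \<rho> = Suc (W t (case_nat 1 \<rho>))"
| "W (App t u) \<rho> = Suc (W t \<rho> + W u \<rho>)"
| "W (ESub t u) \<rho> = W t (case_nat ((W u \<rho> + 1) * max 1 (m t 0)) \<rho>) + W u \<rho> + 1"

lemma m_lift: "m (lift s k) j = (if j < k then m s j else if j = k then 0 else m s (j - 1))"
  by (induct s arbitrary: k j) (auto split: nat.split)

lemma m_subst: "m (subst t k s) j = (if j < k then m t j else m t (Suc j)) + m t k * m s j"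
  by (induct t arbitrary: k j s) (auto simp: m_lift algebra_simps split: nat.split)

lemma W_lift: "W (lift s k) \<rho> = W s (\<lambda>i. if i < k then \<rho> i else \<rho> (Suc i))"
proof (induct s arbitrary: k \<rho>)
  case (Lam t)
  have e: "(\<lambda>i. if i < Suc k then case_nat 1 \<rho> i else case_nat 1 \<rho> (Suc i))
     = case_nat 1 (\<lambda>i. if i < k then \<rho> i else \<rho> (Suc i))"
    by (auto simp: fun_eq_iff split: nat.split)
  show ?case by (simp only: lift.simps W.simps Lam e)
next
  case (ESub t u)
  have e: "\<And>a. (\<lambda>i. if i < Suc k then case_nat a \<rho> i else case_nat a \<rho> (Suc i))
     = case_nat a (\<lambda>i. if i < k then \<rho> i else \<rho> (Suc i))"
    by (auto simp: fun_eq_iff split: nat.split)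
  show ?case using ESub by (simp add: e m_lift)
qed auto

lemma W_subst: "W (subst t k s) \<rho> = W t (\<lambda>i. if i < k then \<rho> i else if i = k then W s \<rho> else \<rho> (i - 1))"
proof (induct t arbitrary: k s \<rho>)
  case (Lam t)
  have l: "W (lift s 0) (case_nat 1 \<rho>) = W s \<rho>" by (simp add: W_lift)
  have e: "(\<lambda>i. if i < Suc k then case_nat 1 \<rho> i else if i = Suc k then W s \<rho> else case_nat 1 \<rho> (i - 1))
     = case_nat 1 (\<lambda>i. if i < k then \<rho> i else if i = k then W s \<rho> else \<rho> (i - 1))"
    by (auto simp: fun_eq_iff split: nat.split)
  show ?case by (simp only: subst.simps W.simps Lam e l)
next
  case (ESub t u)
  have l: "\<And>a. W (lift s 0) (case_nat a \<rho>) = W s \<rho>" by (simp add: W_lift)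
  have e: "\<And>a. (\<lambda>i. if i < Suc k then case_nat a \<rho> i else if i = Suc k then W s \<rho> else case_nat a \<rho> (i - 1))
     = case_nat a (\<lambda>i. if i < k then \<rho> i else if i = k then W s \<rho> else \<rho> (i - 1))"
    by (auto simp: fun_eq_iff split: nat.split)
  define \<rho>' where "\<rho>' = (\<lambda>i. if i < k then \<rho> i else if i = k then W s \<rho> else \<rho> (i - 1))"
  have m0: "m (subst t (Suc k) (lift s 0)) 0 = m t 0" by (simp add: m_subst m_lift)
  have Wu: "W (subst u k s) \<rho> = W u \<rho>'" using ESub(2) \<rho>'_def by simp
  define A where "A = (W u \<rho>' + 1) * max 1 (m t 0)"
  have "W (subst t (Suc k) (lift s 0)) (case_nat A \<rho>) = W t (case_nat A \<rho>')"
    unfolding \<rho>'_def by (simp only: ESub(1) e l)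
  then show ?case by (simp only: subst.simps W.simps m0 Wu A_def[symmetric] \<rho>'_def[symmetric])
qed auto

lemma W_mono: "(\<And>i. \<rho> i \<le> \<sigma> i) \<Longrightarrow> W t \<rho> \<le> W t \<sigma>"
proof (induct t arbitrary: \<rho> \<sigma>)
  case (Lam t)
  have "W t (case_nat 1 \<rho>) \<le> W t (case_nat 1 \<sigma>)"
    by (rule Lam(1)) (use Lam(2) in \<open>auto split: nat.split\<close>)
  then show ?case by simp
next
  case (App t u)
  then show ?case by (simp add: add_mono)
next
  case (ESub t u)
  have u: "W u \<rho> \<le> W u \<sigma>" using ESub by blast
  then have "(W u \<rho> + 1) * max 1 (m t 0) \<le> (W u \<sigma> + 1) * max 1 (m t 0)" by simp
  then have "W t (case_nat ((W u \<rho> + 1) * max 1 (m t 0)) \<rho>) \<le> W t (case_nat ((W u \<sigma> + 1) * max 1 (m t 0)) \<sigma>)"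
    by (intro ESub(1)) (use ESub(3) in \<open>auto split: nat.split\<close>)
  then show ?case using u by simp
qed auto

lemma occ_le_m: "occ t k \<le> m t k"
proof (induct t arbitrary: k)
  case (ESub t u)
  have "occ u k \<le> max 1 (m t 0) * m u k" using ESub(2)[of k]
    by (metis le_trans max.cobounded1 mult_1 mult_le_mono1)
  then show ?case using ESub(1)[of "Suc k"] by simp
qed (auto intro: add_mono)

lemma m_split: "split k t t' \<Longrightarrow> m t' k + m t' (Suc k) = m t k \<and> (\<forall>j<k. m t' j = m t j)
   \<and> (\<forall>j>k. m t' (Suc j) = m t j)"
proof (induct rule: split.induct)
  case (split_lam k t t')
  then show ?case by (auto simp: less_Suc_eq_0_disj)
next
  case (split_esub k t t' u u')
  then have 0: "m t' 0 = m t 0" by auto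
  have "m u k * max 1 (m t 0) = m u' k * max 1 (m t 0) + m u' (Suc k) * max 1 (m t 0)"
    using split_esub by (metis add_mult_distrib)
  then show ?case using split_esub 0 by (auto simp: algebra_simps)
qed auto


lemma W_split: "split k t t' \<Longrightarrow> (\<And>i. i < k \<Longrightarrow> \<rho>' i \<le> \<rho> i) \<Longrightarrow> (\<And>i. i > k \<Longrightarrow> \<rho>' (Suc i) \<le> \<rho> i)
  \<Longrightarrow> \<rho>' k + \<rho>' (Suc k) \<le> \<rho> k
  \<Longrightarrow> W t' \<rho>' + occ t' k * \<rho>' (Suc k) + occ t' (Suc k) * \<rho>' k \<le> W t \<rho>"
proof (induct arbitrary: \<rho> \<rho>' rule: split.induct)
  case (split_lam k t t')
  have "W t' (case_nat 1 \<rho>') + occ t' (Suc k) * case_nat 1 \<rho>' (Suc (Suc k))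
      + occ t' (Suc (Suc k)) * case_nat 1 \<rho>' (Suc k) \<le> W t (case_nat 1 \<rho>)"
    by (rule split_lam(2)) (use split_lam(3,4,5) in \<open>auto split: nat.split simp: less_Suc_eq_0_disj\<close>)
  then show ?case by simp
next
  case (split_app k t t' u u')
  have "W t' \<rho>' + occ t' k * \<rho>' (Suc k) + occ t' (Suc k) * \<rho>' k \<le> W t \<rho>"
    using split_app by blast
  moreover have "W u' \<rho>' + occ u' k * \<rho>' (Suc k) + occ u' (Suc k) * \<rho>' k \<le> W u \<rho>"
    using split_app by blast
  ultimately show ?case by (simp add: algebra_simps)
next
  case (split_esub k t t' u u')
  have m0: "m t' 0 = m t 0" using m_split[OF split_esub(1)] by auto
  have hu: "W u' \<rho>' + occ u' k * \<rho>' (Suc k) + occ u' (Suc k) * \<rho>' k \<le> W u \<rho>"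
    using split_esub by blast
  define e where "e = (W u \<rho> + 1) * max 1 (m t 0)"
  define e' where "e' = (W u' \<rho>' + 1) * max 1 (m t 0)"
  have "e' \<le> e" unfolding e_def e'_def using hu by simp
  then have ht: "W t' (case_nat e' \<rho>') + occ t' (Suc k) * case_nat e' \<rho>' (Suc (Suc k))
      + occ t' (Suc (Suc k)) * case_nat e' \<rho>' (Suc k) \<le> W t (case_nat e \<rho>)"
    by (intro split_esub(2)) (use split_esub(5,6,7) in \<open>auto split: nat.split simp: less_Suc_eq_0_disj\<close>)
  have "W (ESub t' u') \<rho>' = W t' (case_nat e' \<rho>') + W u' \<rho>' + 1" by (simp add: e'_def m0)
  moreover have "W (ESub t u) \<rho> = W t (case_nat e \<rho>) + W u \<rho> + 1" by (simp add: e_def)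
  ultimately show ?case using hu ht by (simp add: algebra_simps)
qed auto

lemma arith_aux: "a + x + y \<le> (b::nat) \<Longrightarrow> c \<le> x \<Longrightarrow> c \<le> y \<Longrightarrow> 0 < c \<Longrightarrow> a + 2*c < b + c"
  by linarith

lemma jstep_dec: "jstep t t' \<Longrightarrow> (\<forall>\<rho>. W t' \<rho> < W t \<rho>) \<and> (\<forall>j. m t' j \<le> m t j)"
proof (induct rule: jstep.induct)
  case (j_w t u)
  show ?case
  proof (intro conjI allI)
    fix \<rho>
    have "W (subst t 0 u) \<rho> \<le> W t (case_nat ((W u \<rho> + 1) * max 1 (m t 0)) \<rho>)"
    proof -
      have "W u \<rho> \<le> (W u \<rho> + 1) * 1" by simp
      also have "\<dots> \<le> (W u \<rho> + 1) * max 1 (m t 0)" by (intro mult_le_mono2) simp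
      finally have x: "W u \<rho> \<le> (W u \<rho> + 1) * max 1 (m t 0)" .
      show ?thesis unfolding W_subst
        by (rule W_mono) (use x in \<open>auto split: nat.split\<close>)
    qed
    then show "W (subst t 0 u) \<rho> < W (ESub t u) \<rho>" by simp
  next
    fix j show "m (subst t 0 u) j \<le> m (ESub t u) j"
      by (simp add: m_subst)
  qed
next
  case (j_d t u)
  show ?case
  proof (intro conjI allI)
    fix \<rho>
    have "W (subst t 0 u) \<rho> \<le> W t (case_nat ((W u \<rho> + 1) * max 1 (m t 0)) \<rho>)"
    proof -
      have "W u \<rho> \<le> (W u \<rho> + 1) * 1" by simp
      also have "\<dots> \<le> (W u \<rho> + 1) * max 1 (m t 0)" by (intro mult_le_mono2) simp
      finally have x: "W u \<rho> \<le> (W u \<rho> + 1) * max 1 (m t 0)" .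
      show ?thesis unfolding W_subst
        by (rule W_mono) (use x in \<open>auto split: nat.split\<close>)
    qed
    then show "W (subst t 0 u) \<rho> < W (ESub t u) \<rho>" by simp
  next
    fix j show "m (subst t 0 u) j \<le> m (ESub t u) j"
      by (simp add: m_subst)
  qed
next
  case (j_c t t' u)
  have ms: "m t' 0 + m t' 1 = m t 0" "\<forall>j>0. m t' (Suc j) = m t j"
    using m_split[OF j_c(2)] by auto
  have a1: "m t' 0 \<ge> 1" using occ_le_m[of t' 0] j_c by linarith
  have b1: "m t' 1 \<ge> 1" using occ_le_m[of t' 1] j_c by linarith
  have mi: "m (ESub t' (lift u 0)) 0 = m t' 1" by (simp add: m_lift)
  show ?case
  proof (intro conjI allI)
    fix \<rho>
    define w where "w = W u \<rho>"
    define A where "A = (w + 1) * m t' 0"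
    define B where "B = (w + 1) * m t' 1"
    define C where "C = (w + 1) * m t 0"
    have wl: "W (lift u 0) (case_nat B \<rho>) = w" by (simp add: W_lift w_def)
    have e1: "max 1 (m t' 1) = m t' 1" "max 1 (m t' 0) = m t' 0" "max 1 (m t 0) = m t 0"
      using a1 b1 ms by auto
    have R1: "W (ESub (ESub t' (lift u 0)) u) \<rho> = W (ESub t' (lift u 0)) (case_nat B \<rho>) + w + 1"
      by (simp only: W.simps mi e1 B_def[symmetric] w_def[symmetric])
    have R2: "W (ESub t' (lift u 0)) (case_nat B \<rho>) = W t' (case_nat A (case_nat B \<rho>)) + w + 1"
      by (simp only: W.simps wl e1 A_def[symmetric])
    have R: "W (ESub (ESub t' (lift u 0)) u) \<rho> = W t' (case_nat A (case_nat B \<rho>)) + 2 * (w + 1)"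
      using R1 R2 by simp
    have L: "W (ESub t u) \<rho> = W t (case_nat C \<rho>) + (w + 1)"
      by (simp only: W.simps e1 C_def[symmetric] w_def[symmetric])
    have "W t' (case_nat A (case_nat B \<rho>)) + occ t' 0 * (case_nat A (case_nat B \<rho>)) (Suc 0)
       + occ t' (Suc 0) * (case_nat A (case_nat B \<rho>)) 0 \<le> W t (case_nat C \<rho>)"
      by (rule W_split[OF j_c(2)]) (auto simp: A_def B_def C_def ms(1)[symmetric] algebra_simps split: nat.split)
    then have "W t' (case_nat A (case_nat B \<rho>)) + occ t' 0 * B + occ t' 1 * A \<le> W t (case_nat C \<rho>)"
      by simp
    moreover have "occ t' 0 * B \<ge> w + 1" using j_c(3) unfolding B_def using b1
      by (metis mult.commute mult_le_mono mult_1 le_trans order_refl)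
    moreover have "occ t' 1 * A \<ge> w + 1" using j_c(4) unfolding A_def using a1
      by (metis mult.commute mult_le_mono mult_1 le_trans order_refl)
    ultimately have "W t' (case_nat A (case_nat B \<rho>)) + 2 * (w + 1) < W t (case_nat C \<rho>) + (w + 1)"
      by (rule arith_aux) simp
    then show "W (ESub (ESub t' (lift u 0)) u) \<rho> < W (ESub t u) \<rho>" unfolding R L .
  next
    fix j
    have "m (ESub (ESub t' (lift u 0)) u) j = m t' (Suc (Suc j)) + (max 1 (m t' 0) + max 1 (m t' 1)) * m u j"
      by (simp add: m_lift algebra_simps)
    also have "\<dots> = m (ESub t u) j" using a1 b1 ms by (simp add: max_def)
    finally show "m (ESub (ESub t' (lift u 0)) u) j \<le> m (ESub t u) j" by simp
  qed
next
  case (j_lam t t')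
  then show ?case by simp
next
  case (j_appl t t' u)
  then show ?case by (simp add: add_mono)
next
  case (j_appr u u' t)
  then show ?case by (simp add: add_mono)
next
  case (j_esubl t t' u)
  show ?case
  proof (intro conjI allI)
    fix \<rho>
    have "m t' 0 \<le> m t 0" using j_esubl by blast
    then have m0: "max 1 (m t' 0) \<le> max 1 (m t 0)" by (simp add: max.coboundedI2)
    let ?e = "(W u \<rho> + 1) * max 1 (m t' 0)"
    let ?f = "(W u \<rho> + 1) * max 1 (m t 0)"
    have "W t' (case_nat ?e \<rho>) < W t (case_nat ?e \<rho>)" using j_esubl by blast
    also have "\<dots> \<le> W t (case_nat ?f \<rho>)"
    proof -
      have ef: "?e \<le> ?f" using m0 by (intro mult_le_mono2)
      show ?thesis using ef by (intro W_mono) (auto split: nat.split)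
    qed
    finally show "W (ESub t' u) \<rho> < W (ESub t u) \<rho>" by simp
  next
    fix j
    have "max 1 (m t' 0) * m u j \<le> max 1 (m t 0) * m u j"
    proof -
      have "m t' 0 \<le> m t 0" using j_esubl by blast
      then show ?thesis by (intro mult_le_mono1) (simp add: max.coboundedI2)
    qed
    then show "m (ESub t' u) j \<le> m (ESub t u) j" using j_esubl by (simp add: add_mono)
  qed
next
  case (j_esubr u u' t)
  show ?case
  proof (intro conjI allI)
    fix \<rho>
    have u: "W u' \<rho> < W u \<rho>" using j_esubr by blast
    let ?e = "(W u' \<rho> + 1) * max 1 (m t 0)"
    let ?f = "(W u \<rho> + 1) * max 1 (m t 0)"
    have "?e \<le> ?f" using u by simp
    then have "W t (case_nat ?e \<rho>) \<le> W t (case_nat ?f \<rho>)" by (intro W_mono) (auto split: nat.split)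
    then show "W (ESub t u') \<rho> < W (ESub t u) \<rho>" using u by simp
  next
    fix j
    show "m (ESub t u') j \<le> m (ESub t u) j" using j_esubr by (simp add: add_mono)
  qed
qed

lemma term_j: "terminating jstep"
  unfolding terminating_def
  by (rule wfp_if_convertible_to_nat[where f = "\<lambda>t. W t (\<lambda>_. 0)"]) (use jstep_dec in blast)

theorem lemma9:
  shows "confluent jstep \<and> terminating jstep
    \<and> (\<forall>t. \<exists>!s. jstep\<^sup>*\<^sup>* t s \<and> j_normal s)
    \<and> (\<forall>i. jnf (Var i) = Var i)
    \<and> (\<forall>u. jnf (Lam u) = Lam (jnf u))
    \<and> (\<forall>u v. jnf (App u v) = App (jnf u) (jnf v))
    \<and> (\<forall>u v. jnf (ESub u v) = subst (jnf u) 0 (jnf v))"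
proof (intro conjI allI)
  show "confluent jstep" unfolding confluent_def
  proof (intro allI impI)
    fix a b c assume "jstep\<^sup>*\<^sup>* a b \<and> jstep\<^sup>*\<^sup>* a c"
    then have "F b = F a" "F c = F a" using rtc_F by auto
    then show "\<exists>d. jstep\<^sup>*\<^sup>* b d \<and> jstep\<^sup>*\<^sup>* c d" using red_F[of b] red_F[of c] by auto
  qed
  show "terminating jstep" by (rule term_j)
  fix t show "\<exists>!s. jstep\<^sup>*\<^sup>* t s \<and> j_normal s"
    using red_F normal_F normal_eq by blast
qed (simp_all add: jnf_F)

end
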